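(* Let $G$ be an $H(4,3)$-free graph with $m$ edges, $\rho=\rho(G)$, and $u^*\in V(G)$. Put $N=N(u^* )$, $W=V(G)\setminus N[u^*]$, $A^{+}=\{v\in N: v\text{ has a neighbor in }N\}$. Assume: $G[A^{+}]\cong K_4$; $e(W)=2$; every vertex of $W$ has at most one neighbor in $A^{+}$ and at least one neighbor in $W$; and \[ \rho^2-\rho\Bigl(e(A^{+})-|A^{+}|+\tfrac32-e(W)\Bigr)<2e(A^{+})+|A^{+}|+e(A^{+},W). \] Then $\rho^2-\frac32\rho<18$. Consequently, if $m\ge 24$ is even, then $\rho(G)<\rho'(m)$.
   Context: $H(4,3)$ is the graph obtained from a $4$-cycle and a triangle by identifying one vertex of the $4$-cycle with one vertex of the triangle; $H(4,3)$-free means containing no subgraph isomorphic to $H(4,3)$. $N[u^*]=N(u^* )\cup\{u^*\}$. For a vertex set $X$, $e(X)$ is the number of edges of the induced subgraph $G[X]$; for disjoint $X,Y$, $e(X,Y)$ is the number of edges between $X$ and $Y$. $\rho(G)$ is the adjacency spectral radius. For even $m$, $\rho'(m)$ is the largest real root of $p_m(x)=x^4-mx^2-(m-2)x+\frac{m}{2}-1$; it is known that $\rho'(m)>L_m:=\frac{1+\sqrt{4m-5}}{2}$ for even $m\ge 6$. *)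

theory Defs
  imports Complex_Main "Jordan_Normal_Form.Spectral_Radius"
begin

definition simple_graph :: "nat \<Rightarrow> (nat \<Rightarrow> nat \<Rightarrow> bool) \<Rightarrow> bool" where
  "simple_graph n adj \<longleftrightarrow>
     (\<forall>u v. adj u v \<longrightarrow> u < n \<and> v < n) \<and>
     (\<forall>u v. adj u v \<longrightarrow> adj v u) \<and> (\<forall>u. \<not> adj u u)"

definition adj_matrix :: "nat \<Rightarrow> (nat \<Rightarrow> nat \<Rightarrow> bool) \<Rightarrow> complex mat" where
  "adj_matrix n adj = mat n n (\<lambda>(i, j). if adj i j then 1 else 0)"

definition rho :: "nat \<Rightarrow> (nat \<Rightarrow> nat \<Rightarrow> bool) \<Rightarrow> real" where
  "rho n adj = spectral_radius (adj_matrix n adj)"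

definition nbhd :: "nat \<Rightarrow> (nat \<Rightarrow> nat \<Rightarrow> bool) \<Rightarrow> nat \<Rightarrow> nat set" where
  "nbhd n adj u = {v. v < n \<and> adj u v}"

definition edges :: "nat \<Rightarrow> (nat \<Rightarrow> nat \<Rightarrow> bool) \<Rightarrow> nat set set" where
  "edges n adj = {{u, v} | u v. u < n \<and> v < n \<and> adj u v}"

definition num_edges :: "nat \<Rightarrow> (nat \<Rightarrow> nat \<Rightarrow> bool) \<Rightarrow> nat" where
  "num_edges n adj = card (edges n adj)"

definition e_in :: "(nat \<Rightarrow> nat \<Rightarrow> bool) \<Rightarrow> nat set \<Rightarrow> nat" where
  "e_in adj X = card {{u, v} | u v. u \<in> X \<and> v \<in> X \<and> adj u v}"

text \<open>e(X,Y): number of edges between (disjoint) X and Y.\<close>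
definition e_between :: "(nat \<Rightarrow> nat \<Rightarrow> bool) \<Rightarrow> nat set \<Rightarrow> nat set \<Rightarrow> nat" where
  "e_between adj X Y = card {(x, y). x \<in> X \<and> y \<in> Y \<and> adj x y}"

text \<open>G contains a subgraph isomorphic to H(4,3): a 4-cycle v a b c and a triangle v d e
  sharing exactly the vertex v (six distinct vertices).\<close>
definition contains_H43 :: "nat \<Rightarrow> (nat \<Rightarrow> nat \<Rightarrow> bool) \<Rightarrow> bool" where
  "contains_H43 n adj \<longleftrightarrow>
     (\<exists>v a b c d e. distinct [v, a, b, c, d, e] \<and> set [v, a, b, c, d, e] \<subseteq> {0..<n} \<and>
        adj v a \<and> adj a b \<and> adj b c \<and> adj c v \<and>
        adj v d \<and> adj d e \<and> adj e v)"

definition H43_free :: "nat \<Rightarrow> (nat \<Rightarrow> nat \<Rightarrow> bool) \<Rightarrow> bool" where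
  "H43_free n adj \<longleftrightarrow> \<not> contains_H43 n adj"

definition p_poly :: "nat \<Rightarrow> real \<Rightarrow> real" where
  "p_poly m x = x ^ 4 - real m * x ^ 2 - (real m - 2) * x + real m / 2 - 1"

definition rho' :: "nat \<Rightarrow> real" where
  "rho' m = Max {x. p_poly m x = 0}"

end

theory Submission imports Defs "HOL-Computational_Algebra.Polynomial" begin

lemma p_poly_eq: "p_poly m x = poly [:real m/2-1, -(real m-2), -real m, 0, 1:] x"
  unfolding p_poly_def by (simp add: algebra_simps power2_eq_square power3_eq_cube power4_eq_xxxx)

lemma rho'_big:
  assumes m: "m \<ge> 24"
  shows "51/10 < rho' m"
proof -
  let ?f = "p_poly m"
  have mr: "real m \<ge> 24" using m by simp
  have a: "?f (51/10) < 0"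
    unfolding p_poly_def using mr by (simp add: power_def field_simps)
  have b: "0 \<le> ?f (real m)"
  proof -
    have "?f (real m) = real m * real m * (real m * (real m - 1) - 1) + 2 * real m + real m / 2 - 1"
      unfolding p_poly_def by (simp add: algebra_simps power2_eq_square power3_eq_cube power4_eq_xxxx)
    moreover have "real m * (real m - 1) - 1 \<ge> 0" proof -
      have "real m * (real m - 1) \<ge> 24 * 23" using mr by (intro mult_mono) auto
      then show ?thesis by simp
    qed
    moreover have "real m * real m * (real m * (real m - 1) - 1) \<ge> 0"
      using calculation(2) by simp
    ultimately show ?thesis using mr by linarith
  qed
  have c: "\<forall>x. 51/10 \<le> x \<and> x \<le> real m \<longrightarrow> isCont ?f x"
    unfolding p_poly_def by (auto intro!: continuous_intros)
  obtain x where x: "51/10 \<le> x" "x \<le> real m" "?f x = 0"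
    using IVT[of ?f "51/10" 0 "real m", OF _ b _ c] a mr by auto
  have fin: "finite {x. ?f x = 0}"
    unfolding p_poly_eq by (rule poly_roots_finite) simp
  have "x \<le> rho' m" unfolding rho'_def using fin x by (intro Max_ge) auto
  moreover have "x \<noteq> 51/10" proof assume "x = 51/10" then show False using x(3) a by (metis order_less_irrefl) qed
  ultimately show ?thesis using x by simp
qed

lemma e_in_K4:
  assumes d: "distinct [a1,a2,a3,a4::nat]" and irr: "\<forall>x. \<not> adj x x"
    and K: "\<forall>x\<in>{a1,a2,a3,a4}. \<forall>y\<in>{a1,a2,a3,a4}. x \<noteq> y \<longrightarrow> adj x y"
  shows "e_in adj {a1,a2,a3,a4} = 6"
proof -
  have "{{x, y} | x y. x \<in> {a1,a2,a3,a4} \<and> y \<in> {a1,a2,a3,a4} \<and> adj x y}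
        = {{a1,a2},{a1,a3},{a1,a4},{a2,a3},{a2,a4},{a3,a4}}"
    using d irr K by auto
  moreover have "card {{a1,a2},{a1,a3},{a1,a4},{a2,a3},{a2,a4},{a3,a4}} = 6"
    using d by (simp add: doubleton_eq_iff)
  ultimately show ?thesis unfolding e_in_def by simp
qed

theorem proposition7p1:
  fixes n :: nat and adj :: "nat \<Rightarrow> nat \<Rightarrow> bool" and u :: nat
  defines "N \<equiv> nbhd n adj u"
  defines "W \<equiv> {0..<n} - (N \<union> {u})"
  defines "Ap \<equiv> {v \<in> N. \<exists>w \<in> N. adj v w}"
  defines "r \<equiv> rho n adj"
  assumes G: "simple_graph n adj"
    and free: "H43_free n adj"
    and u: "u < n"
    and K4: "card Ap = 4" "\<forall>x\<in>Ap. \<forall>y\<in>Ap. x \<noteq> y \<longrightarrow> adj x y"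
    and eW: "e_in adj W = 2"
    and W1: "\<forall>w\<in>W. card {a \<in> Ap. adj w a} \<le> 1"
    and W2: "\<forall>w\<in>W. \<exists>w'\<in>W. adj w w'"
    and ineq: "r ^ 2 - r * (real (e_in adj Ap) - real (card Ap) + 3 / 2 - real (e_in adj W))
               < 2 * real (e_in adj Ap) + real (card Ap) + real (e_between adj Ap W)"
  shows "r ^ 2 - 3 / 2 * r < 18 \<and>
         (\<forall>m. m = num_edges n adj \<longrightarrow> m \<ge> 24 \<longrightarrow> even m \<longrightarrow> r < rho' m)"
proof -
  have sym: "\<And>x y. adj x y \<Longrightarrow> adj y x" and irr: "\<And>x. \<not> adj x x"
    and bd: "\<And>x y. adj x y \<Longrightarrow> x < n \<and> y < n"
    using G unfolding simple_graph_def by blast+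
  have ApN: "\<And>x. x \<in> Ap \<Longrightarrow> adj u x \<and> x < n \<and> x \<noteq> u"
    unfolding Ap_def N_def nbhd_def using irr by auto
  have Wp: "\<And>w. w \<in> W \<Longrightarrow> w < n \<and> w \<noteq> u \<and> \<not> adj u w \<and> w \<notin> Ap"
    unfolding W_def Ap_def N_def nbhd_def by auto
  obtain a1 B where B: "Ap = insert a1 B" "a1 \<notin> B" "card B = 3"
    using K4(1) card_Suc_eq[of Ap 3] by auto
  then obtain a2 a3 a4 where B3: "B = {a2,a3,a4}" "a2 \<noteq> a3" "a3 \<noteq> a4" "a2 \<noteq> a4"
    using card_3_iff by metis
  have Apeq: "Ap = {a1,a2,a3,a4}" and dist: "distinct [a1,a2,a3,a4]" using B B3 by auto
  have eAp: "e_in adj Ap = 6" unfolding Apeq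
    by (rule e_in_K4[OF dist]) (use irr K4(2) Apeq in auto)
  have L1: "\<exists>b c. b \<in> Ap \<and> c \<in> Ap \<and> distinct [x,b,c]" if "x \<in> Ap" for x
    using that dist unfolding Apeq by auto
  have L2: "\<exists>c d. c \<in> Ap \<and> d \<in> Ap \<and> distinct [x,y,c,d]" if "x \<in> Ap" "y \<in> Ap" "x \<noteq> y" for x y
    using that dist unfolding Apeq by auto
  have key: False if w: "w \<in> W" "w' \<in> W" "adj w w'" and xy: "x \<in> Ap" "y \<in> Ap" "adj x w" "adj y w'"
    for w w' x y
  proof (cases "x = y")
    case True
    obtain b c where bc: "b \<in> Ap" "c \<in> Ap" "distinct [x,b,c]" using L1 xy by blast
    have "contains_H43 n adj"
      unfolding contains_H43_def
      apply (rule exI[of _ x], rule exI[of _ b], rule exI[of _ u], rule exI[of _ c],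
             rule exI[of _ w], rule exI[of _ w'])
      using w xy bc True Wp[OF w(1)] Wp[OF w(2)] ApN[OF xy(1)] ApN[OF bc(1)] ApN[OF bc(2)]
        K4(2) u irr[of w] sym
      by auto
    then show False using free unfolding H43_free_def by blast
  next
    case False
    obtain c d where cd: "c \<in> Ap" "d \<in> Ap" "distinct [x,y,c,d]" using L2 xy False by blast
    have "contains_H43 n adj"
      unfolding contains_H43_def
      apply (rule exI[of _ x], rule exI[of _ w], rule exI[of _ w'], rule exI[of _ y],
             rule exI[of _ c], rule exI[of _ d])
      using w xy cd Wp[OF w(1)] Wp[OF w(2)] ApN[OF xy(1)] ApN[OF xy(2)] ApN[OF cd(1)] ApN[OF cd(2)]
        K4(2) irr[of w] sym
      by auto
    then show False using free unfolding H43_free_def by blast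
  qed
  define S where "S = {(x, y). x \<in> Ap \<and> y \<in> W \<and> adj x y}"
  define WA where "WA = {w \<in> W. \<exists>x\<in>Ap. adj x w}"
  define EW where "EW = {{x, y} | x y. x \<in> W \<and> y \<in> W \<and> adj x y}"
  have finW: "finite W" unfolding W_def by auto
  have injS: "inj_on snd S"
  proof (rule inj_onI)
    fix p q assume p: "p \<in> S" and q: "q \<in> S" and e: "snd p = snd q"
    obtain x y where pxy: "p = (x, y)" by (cases p)
    obtain x' y' where qxy: "q = (x', y')" by (cases q)
    have yW: "y \<in> W" and yy: "y' = y" using p q e pxy qxy unfolding S_def by auto
    have "x \<in> {a \<in> Ap. adj y a}" "x' \<in> {a \<in> Ap. adj y a}"
      using p q pxy qxy yy sym unfolding S_def by auto
    moreover have "finite {a \<in> Ap. adj y a}" using Apeq by auto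
    ultimately have "x = x'" using W1 yW
      by (metis card_le_Suc0_iff_eq One_nat_def)
    then show "p = q" using pxy qxy yy by simp
  qed
  have sndS: "snd ` S = WA" unfolding S_def WA_def by force
  have cardS: "e_between adj Ap W = card WA"
    unfolding e_between_def S_def[symmetric] using card_image[OF injS] sndS by simp
  define g where "g w = {w, SOME w'. w' \<in> W \<and> adj w w'}" for w
  have gs: "(SOME w'. w' \<in> W \<and> adj w w') \<in> W \<and> adj w (SOME w'. w' \<in> W \<and> adj w w')"
    if "w \<in> W" for w
    using W2 that by (metis (mono_tags, lifting) someI)
  have gin: "g ` WA \<subseteq> EW" unfolding EW_def WA_def g_def using gs by blast
  have ginj: "inj_on g WA"
  proof (rule inj_onI)
    fix w1 w2 assume w1: "w1 \<in> WA" and w2: "w2 \<in> WA" and e: "g w1 = g w2"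
    show "w1 = w2"
    proof (rule ccontr)
      assume ne: "w1 \<noteq> w2"
      have "w1 = (SOME w'. w' \<in> W \<and> adj w2 w')"
        using e ne unfolding g_def by (auto simp: doubleton_eq_iff)
      then have "adj w2 w1" using gs w2 unfolding WA_def by auto
      moreover obtain x where "x \<in> Ap" "adj x w2" using w2 unfolding WA_def by auto
      moreover obtain y where "y \<in> Ap" "adj y w1" using w1 unfolding WA_def by auto
      ultimately show False using key w1 w2 unfolding WA_def by blast
    qed
  qed
  have finEW: "finite EW"
  proof -
    have "EW \<subseteq> (\<lambda>(x, y). {x, y}) ` (W \<times> W)" unfolding EW_def by auto
    then show ?thesis using finW finite_subset by blast
  qed
  have "card WA \<le> card EW" using card_inj_on_le[OF ginj gin finEW] .
  also have "card EW = 2" using eW unfolding EW_def e_in_def by simp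
  finally have eb: "e_between adj Ap W \<le> 2" using cardS by simp
  have part1: "r ^ 2 - 3 / 2 * r < 18"
    using ineq eAp K4(1) eW eb by simp
  have r51: "r < 51/10"
  proof (rule ccontr)
    assume "\<not> r < 51/10"
    then have "r \<ge> 51/10" by simp
    then have "r * (r - 3/2) \<ge> 51/10 * (51/10 - 3/2)" by (intro mult_mono) auto
    then show False using part1 by (simp add: power2_eq_square algebra_simps)
  qed
  show ?thesis using part1 r51 rho'_big by (smt (verit))
qed

end
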